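(* Let $h>0$ and let $f:[0,h]\to\mathbb{R}^n$ be a Lipschitz function satisfying $\frac{|f(h)-f(0)|}{h}=A\ge2$. Then $$\int_0^h x\,(|f'(x)|^2-1)^2\,dx\ge h^2\frac{A^4}{16}.$$ *)

theory Defs
  imports "HOL-Analysis.Analysis"
begin

end

theory Submission
  imports Defs
begin


lemma lip_ae_deriv:
  fixes \<psi> :: "real \<Rightarrow> real"
  assumes lip: "L-lipschitz_on UNIV \<psi>"
  obtains g N where "negligible N" "\<And>x. x \<notin> N \<Longrightarrow> (\<psi> has_real_derivative g x) (at x)"
    "\<And>a b. a \<le> b \<Longrightarrow> (g has_integral (\<psi> b - \<psi> a)) {a..b}"
    "\<And>a b. g absolutely_integrable_on {a..b}"
proof -
  have L0: "L \<ge> 0" using lipschitz_on_nonneg[OF lip] .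
  have lipD: "\<bar>\<psi> x - \<psi> y\<bar> \<le> L * \<bar>x - y\<bar>" for x y
    using lipschitz_onD[OF lip, of x y] by (simp add: dist_real_def)
  define K where "K = L + 1"
  define F where "F = (\<lambda>x. \<psi> x + K * x)"
  have Flow: "y - x \<le> F y - F x" if "x \<le> y" for x y
    using lipD[of y x] that by (simp add: F_def K_def algebra_simps abs_if split: if_splits)
  have Fup: "\<bar>F y - F x\<bar> \<le> (L + K) * \<bar>y - x\<bar>" for x y
  proof -
    have "\<bar>F y - F x\<bar> = \<bar>(\<psi> y - \<psi> x) + K * (y - x)\<bar>" by (simp add: F_def algebra_simps)
    also have "\<dots> \<le> \<bar>\<psi> y - \<psi> x\<bar> + K * \<bar>y - x\<bar>"
      using K_def L0 by (simp add: abs_mult order_trans[OF abs_triangle_ineq])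
    also have "\<dots> \<le> (L + K) * \<bar>y - x\<bar>" using lipD[of y x] by (simp add: algebra_simps)
    finally show ?thesis .
  qed
  have Fless: "F x < F y \<longleftrightarrow> x < y" for x y
    using Flow[of x y] Flow[of y x] by (cases "x < y") auto
  have Fle: "F x \<le> F y \<longleftrightarrow> x \<le> y" for x y
    using Fless[of y x] by linarith
  have contF: "continuous_on UNIV F"
  proof -
    have "continuous_on UNIV \<psi>" using lipschitz_on_continuous_on[OF lip] .
    then show ?thesis unfolding F_def by (intro continuous_intros)
  qed
  have surjF: "\<exists>x. F x = c" for c
  proof -
    define r where "r = \<bar>c - F 0\<bar>"
    have "F (-r) \<le> c" using Flow[of "-r" 0] by (simp add: r_def)
    moreover have "c \<le> F r" using Flow[of 0 r] by (simp add: r_def)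
    moreover have "-r \<le> r" by (simp add: r_def)
    ultimately show ?thesis
      using IVT'[of F "-r" c r] contF by (auto intro: continuous_on_subset)
  qed
  define G where "G = inv F"
  have FG: "F (G y) = y" for y unfolding G_def by (metis surjF surj_f_inv_f surjI)
  have GF: "G (F x) = x" for x
    by (metis FG Fless less_irrefl linorder_neqE_linordered_idom)
  have monoG: "mono G"
    by (rule monoI) (metis FG Fle)
  have Gmeas: "G \<in> borel_measurable borel" using borel_measurable_mono[OF monoG] .
  define Nm where "Nm = distr lborel borel G"
  have sNm: "sets Nm = sets lborel" by (simp add: Nm_def)
  have pre: "G -` A = F ` A" for A
    by (auto simp: image_def) (metis FG, metis GF)
  have ac: "absolutely_continuous lborel Nm"
    unfolding absolutely_continuous_def
  proof
    fix A :: "real set" assume A: "A \<in> null_sets lborel"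
    then have Ab: "A \<in> sets borel" by auto
    have "negligible A"
      using A null_sets_completionI negligible_iff_null_sets by blast
    then have neg: "negligible (F ` A)"
      by (rule negligible_locally_Lipschitz_image[where f=F, OF order_refl])
         (intro exI[of _ UNIV] exI[of _ "L + K"], use Fup in \<open>auto simp: real_norm_def\<close>)
    have FAb: "F ` A \<in> sets borel"
      using measurable_sets[OF Gmeas Ab] pre[of A] by simp
    have "F ` A \<in> null_sets lborel"
      using neg FAb by (simp add: negligible_iff_null_sets null_sets_completion_iff)
    then show "A \<in> null_sets Nm"
      using Ab pre[of A] Gmeas unfolding Nm_def
      by (simp add: null_sets_def emeasure_distr)
  qed
  obtain f where fm: "f \<in> borel_measurable lborel" and dens: "density lborel f = Nm"
    using sigma_finite_measure.Radon_Nikodym[OF sigma_finite_lborel ac sNm] by blast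
  have preI: "G -` {a..b} = {F a..F b}" for a b
  proof (intro set_eqI)
    fix y
    have "y \<in> G -` {a..b} \<longleftrightarrow> a \<le> G y \<and> G y \<le> b" by simp
    also have "\<dots> \<longleftrightarrow> F a \<le> y \<and> y \<le> F b"
      using Fle[of a "G y"] Fle[of "G y" b] FG[of y] by simp
    finally show "y \<in> G -` {a..b} \<longleftrightarrow> y \<in> {F a..F b}" by simp
  qed
  have NmI: "emeasure Nm {a..b} = ennreal (F b - F a)" if "a \<le> b" for a b
  proof -
    have "emeasure Nm {a..b} = emeasure lborel (G -` {a..b})"
      unfolding Nm_def using Gmeas by (simp add: emeasure_distr)
    also have "\<dots> = ennreal (F b - F a)"
      using that by (simp add: preI Fle)
    finally show ?thesis .
  qed
  define g where "g = (\<lambda>x. enn2real (f x))"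
  have gm: "g \<in> borel_measurable borel" using fm unfolding g_def by simp
  have gnn: "g x \<ge> 0" for x by (simp add: g_def)
  have gint: "(g has_integral (F b - F a)) {a..b}" if ab: "a \<le> b" for a b
  proof -
    have e1: "(\<integral>\<^sup>+ x. f x * indicator {a..b} x \<partial>lborel) = ennreal (F b - F a)"
      using NmI[OF ab] emeasure_density[OF fm, of "{a..b}"] dens by simp
    have "AE x in lborel. f x * indicator {a..b} x \<noteq> \<infinity>"
      by (rule nn_integral_PInf_AE) (use fm e1 in auto)
    then have ae: "AE x in lborel. ennreal (g x * indicator {a..b} x) = f x * indicator {a..b} x"
      by eventually_elim (auto simp: g_def indicator_def ennreal_enn2real_if)
    have "(\<integral>\<^sup>+ x. ennreal (g x * indicator {a..b} x) \<partial>lborel) = (\<integral>\<^sup>+ x. f x * indicator {a..b} x \<partial>lborel)"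
      by (rule nn_integral_cong_AE[OF ae])
    then have "(\<integral>\<^sup>+ x. ennreal (g x * indicator {a..b} x) \<partial>lborel) = ennreal (F b - F a)"
      using e1 by simp
    then have "((\<lambda>x. g x * indicator {a..b} x) has_integral (F b - F a)) UNIV"
      by (intro nn_integral_has_integral) (use gm gnn Flow[OF ab] ab in auto)
    moreover have "(\<lambda>x. g x * indicator {a..b} x) = (\<lambda>x. if x \<in> {a..b} then g x else 0)"
      by (auto simp: indicator_def)
    ultimately show ?thesis
      by (simp only: has_integral_restrict_UNIV)
  qed
  have gintc: "g integrable_on cbox a b" for a b
  proof (cases "a \<le> b")
    case True then show ?thesis using gint[OF True] by auto
  next
    case False then have "cbox a b = {}" by auto
    then show ?thesis by (simp add: integrable_on_empty)
  qed
  obtain N1 where N1: "negligible N1"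
    "\<And>x e. \<lbrakk>x \<notin> N1; 0 < e\<rbrakk> \<Longrightarrow> \<exists>d>0. \<forall>h. 0 < h \<and> h < d \<longrightarrow>
                         norm(integral (cbox x (x + h *\<^sub>R One)) g /\<^sub>R h ^ DIM(real) - g x) < e"
    using integrable_ccontinuous_explicit[of g] gintc by blast
  have gintc2: "(\<lambda>t. g (- t)) integrable_on cbox a b" for a b
    using gintc[of "-b" "-a"] by (metis integrable_reflect minus_minus)
  obtain N2 where N2: "negligible N2"
    "\<And>x e. \<lbrakk>x \<notin> N2; 0 < e\<rbrakk> \<Longrightarrow> \<exists>d>0. \<forall>h. 0 < h \<and> h < d \<longrightarrow>
                         norm(integral (cbox x (x + h *\<^sub>R One)) (\<lambda>t. g (- t)) /\<^sub>R h ^ DIM(real) - g (- x)) < e"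
    using integrable_ccontinuous_explicit[of "\<lambda>t. g (- t)"] gintc2 by blast
  have negN2: "negligible (uminus ` N2)"
    by (rule negligible_locally_Lipschitz_image[OF order_refl N2(1)])
       (intro exI[of _ UNIV] exI[of _ 1], auto simp: norm_minus_commute)
  define N where "N = N1 \<union> uminus ` N2"
  have negN: "negligible N" using N1(1) negN2 by (simp add: N_def)
  have right: "\<exists>d>0. \<forall>k. 0 < k \<and> k < d \<longrightarrow> \<bar>(F (x + k) - F x) / k - g x\<bar> < e"
    if xe: "x \<notin> N1" "e > 0" for x e
  proof -
    obtain d where d: "d > 0" "\<And>k. 0 < k \<and> k < d \<Longrightarrow>
       norm(integral (cbox x (x + k *\<^sub>R One)) g /\<^sub>R k ^ DIM(real) - g x) < e"
      using N1(2)[OF xe] by blast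
    show ?thesis
    proof (intro exI[of _ d] conjI allI impI)
      fix k assume k: "0 < k \<and> k < d"
      have "integral {x..x+k} g = F (x + k) - F x"
        using gint[of x "x+k"] k by (simp add: integral_unique)
      then show "\<bar>(F (x + k) - F x) / k - g x\<bar> < e"
        using d(2)[OF k] by (simp add: divide_inverse mult.commute)
    qed (use d in auto)
  qed
  have left: "\<exists>d>0. \<forall>k. 0 < k \<and> k < d \<longrightarrow> \<bar>(F x - F (x - k)) / k - g x\<bar> < e"
    if xe: "-x \<notin> N2" "e > 0" for x e
  proof -
    obtain d where d: "d > 0" "\<And>k. 0 < k \<and> k < d \<Longrightarrow>
       norm(integral (cbox (-x) (-x + k *\<^sub>R One)) (\<lambda>t. g (- t)) /\<^sub>R k ^ DIM(real) - g (- (-x))) < e"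
      using N2(2)[OF xe] by blast
    show ?thesis
    proof (intro exI[of _ d] conjI allI impI)
      fix k assume k: "0 < k \<and> k < d"
      have H0: "(g has_integral (F x - F (x - k))) {x-k..x}" using gint[of "x-k" x] k by simp
      have "((\<lambda>t. g (- t)) has_integral (F x - F (x - k))) {-x..-(x-k)}"
        by (simp only: has_integral_reflect_real H0)
      then have H1: "integral {-x..-(x-k)} (\<lambda>t. g (- t)) = F x - F (x - k)"
        by (rule integral_unique)
      have "-(x-k) = -x+k" by simp
      then have "integral {-x..-x+k} (\<lambda>t. g (- t)) = F x - F (x - k)"
        using H1 by (simp only:)
      then show "\<bar>(F x - F (x - k)) / k - g x\<bar> < e"
        using d(2)[OF k] by (simp add: divide_inverse mult.commute)
    qed (use d in auto)
  qed
  have derF: "(F has_real_derivative g x) (at x)" if "x \<notin> N" for x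
  proof -
    have x1: "x \<notin> N1" and x2: "-x \<notin> N2" using that by (auto simp: N_def image_iff)
    have "((\<lambda>y. (F y - F x) / (y - x)) \<longlongrightarrow> g x) (at_right x)"
    proof (rule tendstoI)
      fix e :: real assume e: "e > 0"
      obtain d where d: "d > 0" "\<And>k. 0 < k \<and> k < d \<Longrightarrow> \<bar>(F (x + k) - F x) / k - g x\<bar> < e"
        using right[OF x1 e] by blast
      show "\<forall>\<^sub>F y in at_right x. dist ((F y - F x) / (y - x)) (g x) < e"
        unfolding eventually_at_right_field
      proof (intro exI[of _ "x + d"] conjI allI impI)
        fix y assume "x < y" "y < x + d"
        then show "dist ((F y - F x) / (y - x)) (g x) < e"
          using d(2)[of "y - x"] by (simp add: dist_real_def)
      qed (use d in auto)
    qed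
    moreover have "((\<lambda>y. (F y - F x) / (y - x)) \<longlongrightarrow> g x) (at_left x)"
    proof (rule tendstoI)
      fix e :: real assume e: "e > 0"
      obtain d where d: "d > 0" "\<And>k. 0 < k \<and> k < d \<Longrightarrow> \<bar>(F x - F (x - k)) / k - g x\<bar> < e"
        using left[OF x2 e] by blast
      show "\<forall>\<^sub>F y in at_left x. dist ((F y - F x) / (y - x)) (g x) < e"
        unfolding eventually_at_left_field
      proof (intro exI[of _ "x - d"] conjI allI impI)
        fix y assume y: "x - d < y" "y < x"
        have "(F y - F x) / (y - x) = (F x - F (x - (x - y))) / (x - y)"
          using y by (simp add: field_simps)
        then show "dist ((F y - F x) / (y - x)) (g x) < e"
          using d(2)[of "x - y"] y by (simp add: dist_real_def)
      qed (use d in auto)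
    qed
    ultimately have "((\<lambda>y. (F y - F x) / (y - x)) \<longlongrightarrow> g x) (at x)"
      using filterlim_at_split[of "\<lambda>y. (F y - F x) / (y - x)" "nhds (g x)" x] by blast
    then show ?thesis
      by (rule has_field_derivative_iff[THEN iffD2])
  qed
  show thesis
  proof (rule that[of N "\<lambda>x. g x - K"])
    show "negligible N" by (rule negN)
  next
    fix x assume "x \<notin> N"
    have "((\<lambda>y. F y - K * y) has_real_derivative g x - K * 1) (at x)"
      by (intro DERIV_diff derF[OF \<open>x \<notin> N\<close>] DERIV_cmult DERIV_ident)
    then show "(\<psi> has_real_derivative g x - K) (at x)"
      by (simp add: F_def)
  next
    fix a b :: real assume ab: "a \<le> b"
    have "((\<lambda>x. g x - K) has_integral (F b - F a) - K * (b - a)) {a..b}"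
      by (intro has_integral_diff gint ab) (use has_integral_const_real[of K a b] ab in \<open>simp add: mult.commute\<close>)
    then show "((\<lambda>x. g x - K) has_integral \<psi> b - \<psi> a) {a..b}"
      by (simp add: F_def algebra_simps)
  next
    fix a b :: real
    have "g absolutely_integrable_on {a..b}"
      by (rule nonnegative_absolutely_integrable_1) (use gintc[of a b] gnn in auto)
    moreover have "(\<lambda>x. K) absolutely_integrable_on {a..b}"
      by (rule absolutely_integrable_continuous_real) auto
    ultimately show "(\<lambda>x. g x - K) absolutely_integrable_on {a..b}"
      by (rule set_integral_diff)
  qed
qed

lemma key_ineq:
  fixes w y A :: real
  assumes w: "w > 0" and y: "y \<ge> 0" and A: "A > 0"
  shows "(A^3/4)*y - A^4/(16*w^3) - A^4/32 - w^6 \<le> w^6*(y^2-1)^2"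
proof -
  define u where "u = w^2*y/A"
  have s1: "(y^2-1)^2 \<ge> y^4/2 - 1"
  proof -
    have "(y^2-1)^2 - (y^4/2 - 1) = (y^2-2)^2/2"
      by (simp add: algebra_simps power2_eq_square power4_eq_xxxx)
    moreover have "(y^2-2)^2/2 \<ge> 0" by simp
    ultimately show ?thesis by linarith
  qed
  have s2: "u^4 + 3/16 \<ge> u/2"
  proof -
    have "u^4 + 3/16 - u/2 = (u - 1/2)^2 * (u^2 + u + 3/4)"
      by (simp add: algebra_simps power2_eq_square power4_eq_xxxx)
    moreover have "u^2 + u + 3/4 \<ge> 0"
    proof -
      have "u^2 + u + 3/4 = (u + 1/2)^2 + 1/2" by (simp add: algebra_simps power2_eq_square)
      then show ?thesis by (metis add_nonneg_nonneg zero_le_power2 zero_le_divide_iff zero_le_one zero_le_numeral)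
    qed
    ultimately show ?thesis by (metis diff_ge_0_iff_ge mult_nonneg_nonneg zero_le_power2)
  qed
  have s3: "3/(16*w^2) \<le> 1/(8*w^3) + 1/16"
  proof -
    have e: "2 + w^3 - 3*w = (w-1)^2*(w+2)"
      by (simp add: algebra_simps power2_eq_square power3_eq_cube)
    have "(w-1)^2*(w+2) \<ge> 0" using w by simp
    then have n: "2 + w^3 - 3*w \<ge> 0" using e by simp
    have "1/(8*w^3) + 1/16 - 3/(16*w^2) = (2 + w^3 - 3*w)/(16*w^3)"
      using w by (simp add: field_simps power2_eq_square power3_eq_cube)
    moreover have "(2 + w^3 - 3*w)/(16*w^3) \<ge> 0" using n w by simp
    ultimately show ?thesis by linarith
  qed
  have s4: "w^6*y^4 = A^4*u^4/w^2"
    using w A by (simp add: u_def field_simps)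
  have s5: "A^4*u/(2*w^2) = A^3*y/2"
    using w A by (simp add: u_def field_simps power2_eq_square power3_eq_cube power4_eq_xxxx)
  have "w^6*y^4 \<ge> A^4*(u/2 - 3/16)/w^2"
    unfolding s4 using s2 w A by (intro divide_right_mono mult_left_mono) auto
  also have "A^4*(u/2 - 3/16)/w^2 = A^3*y/2 - A^4*(3/(16*w^2))"
    using s5 w by (simp add: field_simps)
  finally have s6: "w^6*y^4 \<ge> A^3*y/2 - A^4*(3/(16*w^2))" .
  have "A^4*(3/(16*w^2)) \<le> A^4*(1/(8*w^3) + 1/16)"
    using s3 A by (intro mult_left_mono) auto
  with s6 have s7: "w^6*y^4 \<ge> A^3*y/2 - A^4/(8*w^3) - A^4/16"
    by (simp add: algebra_simps)
  have "w^6*(y^2-1)^2 \<ge> w^6*(y^4/2 - 1)"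
    using s1 w by (intro mult_left_mono) auto
  with s7 show ?thesis by (simp add: algebra_simps)
qed


theorem lemma2p2:
  fixes f :: "real \<Rightarrow> 'a::euclidean_space" and h A L :: real
  assumes "h > 0"
    and "L-lipschitz_on {0..h} f"
    and "norm (f h - f 0) / h = A"
    and "A \<ge> 2"
  shows "(\<integral>\<^sup>+ x \<in> {0..h}. ennreal (x * ((norm (vector_derivative f (at x within {0..h})))\<^sup>2 - 1)\<^sup>2) \<partial>lebesgue)
           \<ge> ennreal (h\<^sup>2 * A ^ 4 / 16)"
proof -
  have h0: "h > 0" and lipf: "L-lipschitz_on {0..h} f" and Adef: "norm (f h - f 0) / h = A"
    and A2: "A \<ge> 2" using assms by auto
  have L0: "L \<ge> 0" using lipschitz_on_nonneg[OF lipf] .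
  define c where "c = (\<lambda>t::real. max 0 (min h t))"
  have c_in: "c t \<in> {0..h}" for t using h0 by (auto simp: c_def)
  have c_id: "t \<in> {0..h} \<Longrightarrow> c t = t" for t by (auto simp: c_def)
  have c_lip: "\<bar>c x - c y\<bar> \<le> \<bar>x - y\<bar>" for x y
    unfolding c_def by (auto simp: abs_if max_def min_def)
  define ft where "ft = (\<lambda>t. f (c t))"
  have ft_eq: "t \<in> {0..h} \<Longrightarrow> ft t = f t" for t by (simp add: ft_def c_id)
  have ftlip: "norm (ft x - ft y) \<le> L * \<bar>x - y\<bar>" for x y
  proof -
    have "norm (ft x - ft y) \<le> L * \<bar>c x - c y\<bar>"
      using lipschitz_onD[OF lipf c_in c_in, of x y] by (simp add: ft_def dist_norm dist_real_def)
    also have "\<dots> \<le> L * \<bar>x - y\<bar>" using c_lip L0 by (intro mult_left_mono) auto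
    finally show ?thesis .
  qed
  have complip: "L-lipschitz_on UNIV (\<lambda>t. ft t \<bullet> v)" if v: "norm v \<le> 1" for v
  proof (rule lipschitz_onI)
    fix x y :: real
    have "\<bar>ft x \<bullet> v - ft y \<bullet> v\<bar> = \<bar>(ft x - ft y) \<bullet> v\<bar>" by (simp add: inner_diff_left)
    also have "\<dots> \<le> norm (ft x - ft y) * norm v" by (rule Cauchy_Schwarz_ineq2)
    also have "\<dots> \<le> norm (ft x - ft y)" using v by (simp add: mult_left_le)
    also have "\<dots> \<le> L * \<bar>x - y\<bar>" by (rule ftlip)
    finally show "dist (ft x \<bullet> v) (ft y \<bullet> v) \<le> L * dist x y" by (simp add: dist_real_def)
  qed (rule L0)
  have "\<forall>i\<in>Basis. \<exists>N. negligible N \<and> (\<forall>x. x \<notin> N \<longrightarrow> (\<lambda>t. ft t \<bullet> i) differentiable (at x))"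
  proof
    fix i :: 'a assume i: "i \<in> Basis"
    have ni: "norm i \<le> 1" using i by simp
    obtain g N where nN: "negligible N" and dN: "\<And>x. x \<notin> N \<Longrightarrow> ((\<lambda>t. ft t \<bullet> i) has_real_derivative g x) (at x)"
      "\<And>a b. a \<le> b \<Longrightarrow> (g has_integral (ft b \<bullet> i - ft a \<bullet> i)) {a..b}"
      "\<And>a b. g absolutely_integrable_on {a..b}"
      by (rule lip_ae_deriv[OF complip[OF ni]], rule that, assumption+)
    show "\<exists>N. negligible N \<and> (\<forall>x. x \<notin> N \<longrightarrow> (\<lambda>t. ft t \<bullet> i) differentiable (at x))"
    proof (intro exI[of _ N] conjI allI impI)
      fix x assume "x \<notin> N"
      then show "(\<lambda>t. ft t \<bullet> i) differentiable (at x)"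
        using dN real_differentiable_def by meson
    qed (rule nN)
  qed
  then obtain NB where NB: "\<And>i. i \<in> Basis \<Longrightarrow> negligible (NB i)"
    "\<And>i x. i \<in> Basis \<Longrightarrow> x \<notin> NB i \<Longrightarrow> (\<lambda>t. ft t \<bullet> i) differentiable (at x)"
    by metis
  have nfh: "norm (f h - f 0) = A * h" using Adef h0 by (simp add: field_simps)
  have npos: "norm (f h - f 0) > 0" using nfh A2 h0 by simp
  define u where "u = (1 / norm (f h - f 0)) *\<^sub>R (f h - f 0)"
  have nu: "norm u = 1" using npos by (simp add: u_def)
  have nu1: "norm u \<le> 1" using nu by simp
  obtain gu Nu where Nu: "negligible Nu"
    and gud: "\<And>x. x \<notin> Nu \<Longrightarrow> ((\<lambda>t. ft t \<bullet> u) has_real_derivative gu x) (at x)"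
    and guint: "\<And>a b. a \<le> b \<Longrightarrow> (gu has_integral (ft b \<bullet> u - ft a \<bullet> u)) {a..b}"
    and guabs: "\<And>a b. gu absolutely_integrable_on {a..b}"
    by (rule lip_ae_deriv[OF complip[OF nu1]], rule that, assumption+)
  have psi_diff: "ft h \<bullet> u - ft 0 \<bullet> u = A * h"
  proof -
    have "ft h \<bullet> u - ft 0 \<bullet> u = (f h - f 0) \<bullet> u" using h0 by (simp add: ft_eq inner_diff_left)
    also have "\<dots> = norm (f h - f 0)" using npos
      by (simp add: u_def inner_commute power2_norm_eq_inner[symmetric] power2_eq_square)
    finally show ?thesis using nfh by simp
  qed
  define NN where "NN = (\<Union>i\<in>Basis. NB i) \<union> Nu \<union> {0, h}"
  have negNN: "negligible NN"
    unfolding NN_def using NB(1) Nu by (auto intro!: negligible_Union)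
  define phi where "phi = (\<lambda>x. x * ((norm (vector_derivative f (at x within {0..h})))\<^sup>2 - 1)\<^sup>2)"
  define e where "e = (\<lambda>x::real. (A^4*h * sqrt h/16) * inverse (sqrt x) + A^4*h/32 + x)"
  define lb where "lb = (\<lambda>x::real. (A^3*h/4) * gu x - e x)"
  have A0: "A > 0" using A2 by simp
  have pointwise: "lb x \<le> phi x" if x: "x \<in> {0..h}" "x \<notin> NN" for x
  proof -
    have x0: "0 < x" and xh: "x < h" using x by (auto simp: NN_def)
    have "ft differentiable (at x)"
      using NB(2) x(2) by (auto simp: NN_def differentiable_componentwise_within[of ft x UNIV])
    then have dD: "(ft has_vector_derivative vector_derivative ft (at x)) (at x)"
      by (simp add: vector_derivative_works)
    define D where "D = vector_derivative ft (at x)"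
    have dfD: "(f has_vector_derivative D) (at x within {0..h})"
      by (rule has_vector_derivative_transform[OF x(1) _ has_vector_derivative_at_within[OF dD[folded D_def]]])
         (simp add: ft_eq)
    have vd: "vector_derivative f (at x within {0..h}) = D"
      by (rule vector_derivative_within_closed_interval[OF h0 x(1) dfD])
    have "((\<lambda>t. ft t \<bullet> u) has_vector_derivative D \<bullet> u) (at x)"
      using bounded_linear.has_vector_derivative[OF bounded_linear_inner_left dD[folded D_def]] .
    then have dpsi: "((\<lambda>t. ft t \<bullet> u) has_real_derivative D \<bullet> u) (at x)"
      by (simp add: has_real_derivative_iff_has_vector_derivative)
    have "x \<notin> Nu" using x(2) by (auto simp: NN_def)
    have gux: "gu x = D \<bullet> u" by (rule DERIV_unique[OF gud[OF \<open>x \<notin> Nu\<close>] dpsi])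
    have gule: "gu x \<le> norm D"
      using Cauchy_Schwarz_ineq2[of D u] nu gux by simp
    define y where "y = norm D"
    define w where "w = root 3 (sqrt x / sqrt h)"
    have sh: "sqrt h > 0" using h0 by simp
    have sx: "sqrt x > 0" using x0 by simp
    have w0: "w > 0" using sh sx by (simp add: w_def)
    have w3: "w^3 = sqrt x / sqrt h" unfolding w_def
      by (rule real_root_pow_pos2) (use sh sx in auto)
    have sxw: "sqrt x = sqrt h * w^3" using w3 sh by (simp add: field_simps)
    have xw: "x = h * w^6"
    proof -
      have "x = (sqrt x)^2" using x0 by simp
      also have "\<dots> = (sqrt h)^2 * (w^3)^2" by (simp add: sxw power_mult_distrib)
      also have "\<dots> = h * w^6" using h0 by (simp add: power_mult[symmetric])
      finally show ?thesis .
    qed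
    have key: "(A^3/4)*y - A^4/(16*w^3) - A^4/32 - w^6 \<le> w^6*(y^2-1)^2"
      by (rule key_ineq[OF w0 _ A0]) (simp add: y_def)
    have e1: "(A^4*h * sqrt h/16) * inverse (sqrt x) = h * (A^4/(16*w^3))"
      using sh w0 by (simp add: sxw field_simps)
    have "lb x \<le> (A^3*h/4) * y - e x"
      unfolding lb_def using gule A0 h0 by (simp add: y_def mult_left_mono)
    also have "\<dots> = h * ((A^3/4)*y - A^4/(16*w^3) - A^4/32 - w^6)"
      unfolding e_def e1 using xw by (simp add: algebra_simps)
    also have "\<dots> \<le> h * (w^6*(y^2-1)^2)"
      using key h0 by (intro mult_left_mono) auto
    also have "\<dots> = phi x"
      unfolding phi_def vd y_def using xw by (simp add: algebra_simps)
    finally show ?thesis .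
  qed
  define E where "E = (\<lambda>t::real. (A^4*h * sqrt h/8) * sqrt t + A^4*h/32 * t + t^2/2)"
  have int_e: "(e has_integral (E h - E 0)) {0..h}"
  proof (rule fundamental_theorem_of_calculus_interior)
    show "0 \<le> h" using h0 by simp
    show "continuous_on {0..h} E" unfolding E_def by (intro continuous_intros) auto
    fix t :: real assume t: "t \<in> {0<..<h}"
    then have t0: "t > 0" by simp
    have "(E has_real_derivative e t) (at t)"
      unfolding E_def e_def using t0
      by (auto intro!: derivative_eq_intros simp: field_simps)
    then show "(E has_vector_derivative e t) (at t)"
      by (simp add: has_real_derivative_iff_has_vector_derivative)
  qed
  have Eval: "E h - E 0 = A^4*h^2/8 + A^4*h^2/32 + h^2/2"
    using h0 by (simp add: E_def power2_eq_square)
  have int_gu: "(gu has_integral A * h) {0..h}"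
    using guint[of 0 h] h0 psi_diff by simp
  have int_ell: "(lb has_integral (3 * A^4 * h^2 / 32 - h^2/2)) {0..h}"
  proof -
    have "(lb has_integral (A^3*h/4) * (A * h) - (E h - E 0)) {0..h}"
      unfolding lb_def by (intro has_integral_diff has_integral_mult_right int_gu int_e)
    moreover have "(A^3*h/4) * (A * h) - (E h - E 0) = 3 * A^4 * h^2 / 32 - h^2/2"
      unfolding Eval by (simp add: power2_eq_square power4_eq_xxxx power3_eq_cube field_simps)
    ultimately show ?thesis by simp
  qed
  have abs_ell: "lb absolutely_integrable_on {0..h}"
  proof -
    have "(\<lambda>x. (A^3*h/4) * gu x) absolutely_integrable_on {0..h}"
      using guabs[of 0 h] by (rule set_integrable_mult_right)
    moreover have "e absolutely_integrable_on {0..h}"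
      by (rule nonnegative_absolutely_integrable_1) (use int_e h0 A0 in \<open>auto simp: e_def\<close>)
    ultimately show ?thesis unfolding lb_def by (rule set_integral_diff)
  qed
  have Ival: "integral {0..h} lb = 3 * A^4 * h^2 / 32 - h^2/2"
    by (rule integral_unique[OF int_ell])
  have A4: "A^4 \<ge> 16"
    using power_mono[OF A2, of 4] by simp
  have bound: "h\<^sup>2 * A ^ 4 / 16 \<le> 3 * A^4 * h^2 / 32 - h^2/2"
  proof -
    have "h^2 * (A^4 - 16) \<ge> 0" using A4 by simp
    then show ?thesis by (simp add: algebra_simps)
  qed
  have S: "set_lebesgue_integral lebesgue {0..h} lb = integral {0..h} lb"
    by (rule set_lebesgue_integral_eq_integral(2)[OF abs_ell])
  have integ: "integrable lebesgue (\<lambda>x. indicator {0..h} x *\<^sub>R lb x)"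
    using abs_ell by (simp add: set_integrable_def)
  define P where "P = (\<integral>\<^sup>+ x. ennreal (indicator {0..h} x *\<^sub>R lb x) \<partial>lebesgue)"
  have "set_lebesgue_integral lebesgue {0..h} lb \<le> enn2real P"
  proof -
    have "set_lebesgue_integral lebesgue {0..h} lb = enn2real P
          - enn2real (\<integral>\<^sup>+ x. ennreal (- (indicator {0..h} x *\<^sub>R lb x)) \<partial>lebesgue)"
      unfolding set_lebesgue_integral_def P_def by (rule real_lebesgue_integral_def[OF integ])
    then show ?thesis by (simp add: enn2real_nonneg)
  qed
  then have "h\<^sup>2 * A ^ 4 / 16 \<le> enn2real P"
    using bound S Ival by linarith
  then have r1: "ennreal (h\<^sup>2 * A ^ 4 / 16) \<le> ennreal (enn2real P)"
    by (rule ennreal_leI)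
  have r2: "ennreal (enn2real P) \<le> P"
    by (cases "P = top") (simp_all add: ennreal_enn2real_if)
  have AEN: "AE x in lebesgue. x \<notin> NN"
    using negNN by (intro AE_not_in) (simp add: negligible_iff_null_sets)
  have r3: "P \<le> (\<integral>\<^sup>+ x \<in> {0..h}. ennreal (phi x) \<partial>lebesgue)"
    unfolding P_def
  proof (rule nn_integral_mono_AE)
    show "AE x in lebesgue. ennreal (indicator {0..h} x *\<^sub>R lb x) \<le> ennreal (phi x) * indicator {0..h} x"
      using AEN
    proof eventually_elim
      case (elim x)
      show ?case
      proof (cases "x \<in> {0..h}")
        case True
        then show ?thesis using pointwise[OF True elim] by (simp add: ennreal_leI)
      next
        case False
        then show ?thesis by simp
      qed
    qed
  qed
  show ?thesis
    using r1 r2 r3 unfolding phi_def by (meson order_trans)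
qed
end
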